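(* Let $n\ge2$, $\rho\in\mathbb{C}\setminus\{-1,1\}$, let $z_k$ be a zero of $p_{2n}(\rho,z)$, and let $\lambda_k=\frac{z_k(1-\rho^2)}{(z_k-\rho)(1-\rho z_k)}$ be the corresponding eigenvalue of $K_n(\rho)$. Then $|z_k|=1$ iff $\lambda_k\in\mathrm{range}\{\sigma(\rho,\theta)\}$.
   Context: $K_n(\rho)=\left[\rho^{|j-k|}\right]_{j,k=1}^n$ (with $\rho^0=1$). $p_{2n}(\rho,z)=z^{2n}+(1+\rho^2)\sum_{k=1}^{n-1}z^{2k}-2\rho\sum_{k=0}^{n-1}z^{2k+1}+1$. For $\rho\neq\pm1$ no zero of $p_{2n}(\rho,\cdot)$ equals $\rho$ or $1/\rho$, so $\lambda_k$ is well defined, and it is an eigenvalue of $K_n(\rho)$. $\sigma(\rho,\theta)=\frac{1-\rho^2}{1-2\rho\cos\theta+\rho^2}$, and $\mathrm{range}\{\sigma(\rho,\theta)\}$ denotes the set of values $\sigma(\rho,\theta)$ for real $\theta\in(-\pi,\pi]$ (at which the denominator is nonzero). For $|\rho|<1$ this is the range of the symbol of the Laurent matrix associated with $K_n(\rho)$; for $|\rho|\ge1$ it is the range of the analytic continuation of that formula. *)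

theory Defs
  imports "HOL-Analysis.Analysis"
begin

definition p2n :: "nat \<Rightarrow> complex \<Rightarrow> complex \<Rightarrow> complex" where
  "p2n n \<rho> z = z ^ (2*n) + (1 + \<rho>\<^sup>2) * (\<Sum>k=1..n-1. z ^ (2*k))
     - 2 * \<rho> * (\<Sum>k=0..n-1. z ^ (2*k+1)) + 1"

definition sigma :: "complex \<Rightarrow> real \<Rightarrow> complex" where
  "sigma \<rho> \<theta> = (1 - \<rho>\<^sup>2) / (1 - 2 * \<rho> * complex_of_real (cos \<theta>) + \<rho>\<^sup>2)"

definition sigma_range :: "complex \<Rightarrow> complex set" where
  "sigma_range \<rho> = {sigma \<rho> \<theta> | \<theta>. \<theta> \<in> {-pi<..pi} \<and>
      1 - 2 * \<rho> * complex_of_real (cos \<theta>) + \<rho>\<^sup>2 \<noteq> 0}"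

definition lam :: "complex \<Rightarrow> complex \<Rightarrow> complex" where
  "lam \<rho> z = z * (1 - \<rho>\<^sup>2) / ((z - \<rho>) * (1 - \<rho> * z))"

end

theory Submission
  imports Defs
begin

lemma geo1: "(1 - w) * (\<Sum>k=0..m. w^k) = 1 - (w::complex)^(Suc m)"
proof (induction m)
  case (Suc m)
  have "(1 - w) * (\<Sum>k=0..Suc m. w^k) = (1 - w) * (\<Sum>k=0..m. w^k) + (1-w)*w^Suc m"
    by (simp add: sum.cl_ivl_Suc algebra_simps)
  also have "\<dots> = (1 - w^Suc m) + (w^Suc m - w^Suc (Suc m))"
    by (simp only: Suc.IH) (simp add: algebra_simps)
  finally show ?case by simp
qed simp

lemma geo2: "(1 - w) * (\<Sum>k=1..m. w^k) = w - (w::complex)^(Suc m)"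
proof (induction m)
  case (Suc m)
  have "(1 - w) * (\<Sum>k=1..Suc m. w^k) = (1 - w) * (\<Sum>k=1..m. w^k) + (1-w)*w^Suc m"
    by (simp add: sum.cl_ivl_Suc algebra_simps)
  also have "\<dots> = (w - w^Suc m) + (w^Suc m - w^Suc (Suc m))"
    by (simp only: Suc.IH) (simp add: algebra_simps)
  finally show ?case by simp
qed (simp add: algebra_simps)

lemma keyid:
  assumes "n \<ge> 1"
  shows "(1 - z\<^sup>2) * p2n n \<rho> z = (1 - \<rho>*z)\<^sup>2 - z^(2*n) * (z - \<rho>)\<^sup>2"
proof -
  obtain m where n: "n = Suc m" using assms by (cases n) auto
  define w where "w = z\<^sup>2"
  have s1: "(\<Sum>k=1..n-1. z^(2*k)) = (\<Sum>k=1..m. w^k)"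
    by (simp add: n w_def power_mult)
  have s0: "(\<Sum>k=0..n-1. z^(2*k+1)) = z * (\<Sum>k=0..m. w^k)"
  proof -
    have e: "z^(2*k) = w^k" for k
      by (simp add: w_def power_mult)
    show ?thesis by (simp add: sum_distrib_left n e)
  qed
  have wn: "z^(2*n) = w^(Suc m)" unfolding n w_def by (simp only: power_mult)
  have "(1 - z\<^sup>2) * p2n n \<rho> z = (1-w)*(w^(Suc m) + 1) + (1+\<rho>\<^sup>2)*((1-w)*(\<Sum>k=1..m. w^k))
     - 2*\<rho>*z*((1-w)*(\<Sum>k=0..m. w^k))"
    unfolding p2n_def s1 s0 wn w_def by (simp add: algebra_simps power2_eq_square)
  also have "\<dots> = (1-w)*(w^(Suc m) + 1) + (1+\<rho>\<^sup>2)*(w - w^(Suc m)) - 2*\<rho>*z*(1 - w^(Suc m))"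
    unfolding geo1 geo2 by simp
  also have "\<dots> = (1 - \<rho>*z)\<^sup>2 - z^(2*n) * (z - \<rho>)\<^sup>2"
  proof -
    have wz: "w = z * z" by (simp add: w_def power2_eq_square)
    have gen: "(1-z*z)*(W + 1) + (1+\<rho>\<^sup>2)*(z*z - W) - 2*\<rho>*z*(1 - W) = (1 - \<rho>*z)\<^sup>2 - W * (z - \<rho>)\<^sup>2" for W
      by (simp add: algebra_simps power2_eq_square)
    show ?thesis unfolding wn wz using gen by simp
  qed
  finally show ?thesis .
qed

theorem proposition3p4:
  fixes n :: nat and \<rho> z :: complex
  assumes "n \<ge> 2" and "\<rho> \<noteq> 1" and "\<rho> \<noteq> -1"
    and "p2n n \<rho> z = 0"
  shows "cmod z = 1 \<longleftrightarrow> lam \<rho> z \<in> sigma_range \<rho>"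
proof -
  have q: "(1 - \<rho>*z)\<^sup>2 = z^(2*n) * (z - \<rho>)\<^sup>2"
    using keyid[of n z \<rho>] assms by simp
  have r2: "1 - \<rho>\<^sup>2 \<noteq> 0"
  proof
    assume "1 - \<rho>\<^sup>2 = 0"
    hence "(1 - \<rho>) * (1 + \<rho>) = 0" by (simp add: algebra_simps power2_eq_square)
    thus False using assms(2,3) by (auto simp: add_eq_0_iff)
  qed
  have z0: "z \<noteq> 0" using q assms(1) by (auto simp: power_0_left)
  have zr: "z \<noteq> \<rho>"
  proof
    assume "z = \<rho>"
    hence "(1 - \<rho>\<^sup>2)\<^sup>2 = 0" using q assms(1) by (simp add: power2_eq_square)
    thus False using r2 by simp
  qed
  have rz: "1 - \<rho>*z \<noteq> 0"
    using q z0 zr by auto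
  have den: "(z - \<rho>) * (1 - \<rho>*z) = z * (1 + \<rho>\<^sup>2 - \<rho> * (z + 1/z))"
    using z0 by (simp add: field_simps power2_eq_square)
  have lamz: "lam \<rho> z = (1 - \<rho>\<^sup>2) / (1 + \<rho>\<^sup>2 - \<rho> * (z + 1/z))"
    unfolding lam_def den using z0 by simp
  have dz: "1 + \<rho>\<^sup>2 - \<rho> * (z + 1/z) \<noteq> 0"
    using den zr rz z0 by auto
  show ?thesis
  proof
    assume "cmod z = 1"
    have zc: "z = cis (Arg z)" 
    proof -
      have "sgn z = z / complex_of_real (cmod z)" by (rule Complex.sgn_eq)
      thus ?thesis using \<open>cmod z = 1\<close> cis_Arg[OF z0] by simp
    qed
    have t: "Arg z \<in> {-pi<..pi}" using Arg_bounded[of z] by auto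
    have c: "z + 1/z = 2 * complex_of_real (cos (Arg z))"
      by (subst (1 2) zc) (simp add: cis_inverse[symmetric] divide_inverse cis.ctr complex_eq_iff)
    have e: "1 - 2 * \<rho> * complex_of_real (cos (Arg z)) + \<rho>\<^sup>2 = 1 + \<rho>\<^sup>2 - \<rho> * (z + 1/z)"
      unfolding c by (simp add: algebra_simps)
    show "lam \<rho> z \<in> sigma_range \<rho>"
    proof -
      have d2: "1 - 2 * \<rho> * complex_of_real (cos (Arg z)) + \<rho>\<^sup>2 \<noteq> 0" unfolding e by (rule dz)
      have "lam \<rho> z = sigma \<rho> (Arg z)" unfolding lamz sigma_def e ..
      thus ?thesis unfolding sigma_range_def using t d2 by blast
    qed
  next
    assume "lam \<rho> z \<in> sigma_range \<rho>"
    then obtain t where d: "1 - 2 * \<rho> * complex_of_real (cos t) + \<rho>\<^sup>2 \<noteq> 0"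
      and eq: "lam \<rho> z = (1 - \<rho>\<^sup>2) / (1 - 2 * \<rho> * complex_of_real (cos t) + \<rho>\<^sup>2)"
      unfolding sigma_range_def sigma_def by auto
    have "1 + \<rho>\<^sup>2 - \<rho> * (z + 1/z) = 1 - 2 * \<rho> * complex_of_real (cos t) + \<rho>\<^sup>2"
    proof -
      have "(1 - \<rho>\<^sup>2) / (1 + \<rho>\<^sup>2 - \<rho> * (z + 1/z)) = (1 - \<rho>\<^sup>2) / (1 - 2 * \<rho> * complex_of_real (cos t) + \<rho>\<^sup>2)"
        using eq lamz by simp
      thus ?thesis using r2 by (simp only: divide_cancel_left) simp
    qed
    hence rr: "\<rho> * (z + 1/z) = \<rho> * (2 * complex_of_real (cos t))" by (simp add: algebra_simps)
    show "cmod z = 1"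
    proof (cases "\<rho> = 0")
      case True
      hence "z^(2*n+2) = 1" using q by (simp add: power_add power2_eq_square mult.commute mult.assoc)
      thus ?thesis using power_eq_1_iff[of z "2*n+2"] by simp
    next
      case False
      hence "z + 1/z = 2 * complex_of_real (cos t)" using rr by simp
      hence "z * z - 2 * complex_of_real (cos t) * z + 1 = 0" using z0
        by (simp add: field_simps)
      moreover have "z * z - 2 * complex_of_real (cos t) * z + 1 = (z - cis t) * (z - cis (-t))"
        by (simp add: algebra_simps complex_eq_iff cis.ctr power2_eq_square cos_squared_eq)
      ultimately have "z = cis t \<or> z = cis (-t)" by simp
      thus ?thesis by auto
    qed
  qed
qed

end
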